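(* Let $A\in\mathbb{R}^{d\times d}$ be invertible, $\bm{b}\in\mathbb{R}^d$, $\bm{x}^\ast=A^{-1}\bm{b}$, $\bm{x}_0\in\mathbb{R}^d$, $\Sigma_0$ symmetric positive-definite. Let $\bm{x}_m$ be the BayesCG mean, defined by the recursion: $\bm{r}_0=\bm{b}-A\bm{x}_0$, $\tilde{\bm{s}}_1=\bm{r}_0$, $\bm{s}_k=\tilde{\bm{s}}_k/\|\tilde{\bm{s}}_k\|_{A\Sigma_0A^\top}$, $\bm{x}_k=\bm{x}_0+\Sigma_0A^\top S_k\Lambda_k^{-1}S_k^\top\bm{r}_0$ with $S_k=[\bm{s}_1,\dots,\bm{s}_k]$ and $\Lambda_k=S_k^\top A\Sigma_0A^\top S_k$, $\bm{r}_k=\bm{b}-A\bm{x}_k$, $\tilde{\bm{s}}_{k+1}=\bm{r}_k-\langle\bm{s}_k,\bm{r}_k\rangle_{A\Sigma_0A^\top}\bm{s}_k$, assuming $\tilde{\bm{s}}_1,\dots,\tilde{\bm{s}}_m\ne\bm{0}$. For $n\ge0$, let $K_n(M,\bm{v})=\operatorname{span}(\bm{v},M\bm{v},\dots,M^n\bm{v})$ and $K_n^\ast=\{\bm{x}_0+\bm{v}:\bm{v}\in K_n(\Sigma_0A^\top A,\Sigma_0A^\top\bm{r}_0)\}$. Then \[\bm{x}_m=\operatorname*{arg\,min}_{\bm{x}\in K_{m-1}^\ast}\|\bm{x}-\bm{x}^\ast\|_{\Sigma_0^{-1}}.\]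
   Context: $\langle\bm{u},\bm{v}\rangle_{B}=\bm{u}^\top B\bm{v}$ and $\|\bm{v}\|_B=\sqrt{\bm{v}^\top B\bm{v}}$ for symmetric positive-definite $B$. *)

theory Defs
  imports "HOL-Analysis.Analysis"
begin

section \<open>Weighted inner product and norm\<close>

definition winner :: "real^'d^'d \<Rightarrow> real^'d \<Rightarrow> real^'d \<Rightarrow> real" where
  "winner B u v = u \<bullet> (B *v v)"

definition wnorm :: "real^'d^'d \<Rightarrow> real^'d \<Rightarrow> real" where
  "wnorm B v = sqrt (v \<bullet> (B *v v))"

definition sym_pos_def :: "real^'d^'d \<Rightarrow> bool" where
  "sym_pos_def S \<longleftrightarrow> transpose S = S \<and> (\<forall>v. v \<noteq> 0 \<longrightarrow> v \<bullet> (S *v v) > 0)"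

section \<open>Inverse of a k x k matrix given by its entries (indices 0..k-1)\<close>

definition sq_inv :: "nat \<Rightarrow> (nat \<Rightarrow> nat \<Rightarrow> real) \<Rightarrow> (nat \<Rightarrow> nat \<Rightarrow> real)" where
  "sq_inv k L = (THE Li.
      (\<forall>i<k. \<forall>j<k. (\<Sum>l<k. L i l * Li l j) = (if i = j then 1 else 0)) \<and>
      (\<forall>i<k. \<forall>j<k. (\<Sum>l<k. Li i l * L l j) = (if i = j then 1 else 0)) \<and>
      (\<forall>i j. k \<le> i \<or> k \<le> j \<longrightarrow> Li i j = 0))"

section \<open>BayesCG recursion\<close>

text \<open>S is the list [s_1, ..., s_k] (so S ! i = s_(i+1)).
  bcg_x gives x_k = x_0 + Sigma A^T S_k Lambda_k^{-1} S_k^T r_0 with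
  Lambda_k = S_k^T (A Sigma A^T) S_k, written out entrywise.\<close>

definition bcg_x :: "real^'d^'d \<Rightarrow> real^'d^'d \<Rightarrow> real^'d \<Rightarrow> real^'d \<Rightarrow> (real^'d) list \<Rightarrow> real^'d" where
  "bcg_x A Sig b x0 S =
     (let B = A ** Sig ** transpose A; r0 = b - A *v x0; k = length S;
          Lam = (\<lambda>i j. (S ! i) \<bullet> (B *v (S ! j)));
          Li = sq_inv k Lam
      in x0 + (Sig ** transpose A) *v
              (\<Sum>i<k. (\<Sum>j<k. Li i j * ((S ! j) \<bullet> r0)) *\<^sub>R (S ! i)))"

text \<open>Unnormalised next direction: s~_1 = r_0 if S = [], otherwise
  s~_(k+1) = r_k - <s_k, r_k>_B s_k with r_k = b - A x_k.\<close>

definition bcg_st :: "real^'d^'d \<Rightarrow> real^'d^'d \<Rightarrow> real^'d \<Rightarrow> real^'d \<Rightarrow> (real^'d) list \<Rightarrow> real^'d" where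
  "bcg_st A Sig b x0 S =
     (let B = A ** Sig ** transpose A in
      if S = [] then b - A *v x0
      else (let r = b - A *v bcg_x A Sig b x0 S
            in r - winner B (last S) r *\<^sub>R last S))"

fun bcg_dirs :: "real^'d^'d \<Rightarrow> real^'d^'d \<Rightarrow> real^'d \<Rightarrow> real^'d \<Rightarrow> nat \<Rightarrow> (real^'d) list" where
  "bcg_dirs A Sig b x0 0 = []"
| "bcg_dirs A Sig b x0 (Suc k) =
     (let S = bcg_dirs A Sig b x0 k; t = bcg_st A Sig b x0 S
      in S @ [(1 / wnorm (A ** Sig ** transpose A) t) *\<^sub>R t])"

text \<open>s~_k for k >= 1 and the BayesCG mean x_k.\<close>

definition bcg_stilde :: "real^'d^'d \<Rightarrow> real^'d^'d \<Rightarrow> real^'d \<Rightarrow> real^'d \<Rightarrow> nat \<Rightarrow> real^'d" where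
  "bcg_stilde A Sig b x0 k = bcg_st A Sig b x0 (bcg_dirs A Sig b x0 (k - 1))"

definition bcg_mean :: "real^'d^'d \<Rightarrow> real^'d^'d \<Rightarrow> real^'d \<Rightarrow> real^'d \<Rightarrow> nat \<Rightarrow> real^'d" where
  "bcg_mean A Sig b x0 k = bcg_x A Sig b x0 (bcg_dirs A Sig b x0 k)"

section \<open>Krylov spaces\<close>

definition krylov :: "nat \<Rightarrow> real^'d^'d \<Rightarrow> real^'d \<Rightarrow> (real^'d) set" where
  "krylov n M v = span {(((*v) M) ^^ i) v | i. i \<le> n}"

end

theory Submission
  imports Defs "Jordan_Normal_Form.Determinant"
begin

lemma mv_sum: "(A::real^'n^'m) *v (\<Sum>i\<in>I. f i) = (\<Sum>i\<in>I. A *v f i)"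
  by (induction I rule: infinite_finite_induct) (auto simp: matrix_vector_right_distrib)

lemma delta_sum_l: "(\<Sum>l<(k::nat). (if i = l then 1 else 0) * (f l::real)) = (if i < k then f i else 0)"
  by (induction k) (auto simp: less_Suc_eq)

lemma delta_sum_r: "(\<Sum>l<(k::nat). (f l::real) * (if l = j then 1 else 0)) = (if j < k then f j else 0)"
  by (induction k) (auto simp: less_Suc_eq)

lemma sq_inv_exists:
  fixes L :: "nat \<Rightarrow> nat \<Rightarrow> real"
  assumes inj: "\<And>c. (\<forall>i<k. (\<Sum>j<k. L i j * c j) = 0) \<Longrightarrow> (\<forall>j<k. c j = 0)"
  shows "\<exists>Li. (\<forall>i<k. \<forall>j<k. (\<Sum>l<k. L i l * Li l j) = (if i = j then 1 else 0)) \<and>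
      (\<forall>i<k. \<forall>j<k. (\<Sum>l<k. Li i l * L l j) = (if i = j then 1 else 0)) \<and>
      (\<forall>i j. k \<le> i \<or> k \<le> j \<longrightarrow> Li i j = 0)"
proof -
  define M :: "real mat" where "M = mat k k (\<lambda>(i,j). L i j)"
  have Mc: "M \<in> carrier_mat k k" unfolding M_def by simp
  have "Determinant.det M \<noteq> 0"
  proof
    assume "Determinant.det M = 0"
    then obtain v where v: "v \<in> carrier_vec k" "v \<noteq> 0\<^sub>v k" "M *\<^sub>v v = 0\<^sub>v k"
      using det_0_iff_vec_prod_zero[OF Mc] by blast
    have "\<forall>i<k. (\<Sum>j<k. L i j * v $ j) = 0"
    proof (intro allI impI)
      fix i assume i: "i < k"
      have "(M *\<^sub>v v) $ i = 0" using v(3) i by simp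
      then show "(\<Sum>j<k. L i j * v $ j) = 0"
        using i v(1) by (simp add: M_def scalar_prod_def lessThan_atLeast0)
    qed
    then have "\<forall>j<k. v $ j = 0" using inj by blast
    then have "v = 0\<^sub>v k" using v(1) by (intro eq_vecI) auto
    with v(2) show False by simp
  qed
  then have "M \<in> Units (ring_mat TYPE(real) k ())" by (rule det_non_zero_imp_unit[OF Mc])
  then obtain N where N: "N \<in> carrier_mat k k" "N * M = 1\<^sub>m k" "M * N = 1\<^sub>m k"
    unfolding Units_def ring_mat_def by auto
  define Li where "Li = (\<lambda>i j. if i < k \<and> j < k then N $$ (i,j) else 0)"
  have 1: "(\<Sum>l<k. L i l * Li l j) = (if i = j then 1 else 0)" if "i<k" "j<k" for i j
  proof -
    have "(M * N) $$ (i,j) = (if i = j then 1 else 0)" using N(3) that by simp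
    then show ?thesis using that N(1)
      by (simp add: M_def Li_def scalar_prod_def lessThan_atLeast0 row_def col_def)
  qed
  have 2: "(\<Sum>l<k. Li i l * L l j) = (if i = j then 1 else 0)" if "i<k" "j<k" for i j
  proof -
    have "(N * M) $$ (i,j) = (if i = j then 1 else 0)" using N(2) that by simp
    then show ?thesis using that N(1)
      by (simp add: M_def Li_def scalar_prod_def lessThan_atLeast0 row_def col_def)
  qed
  show ?thesis
    by (rule exI[of _ Li]) (use 1 2 in \<open>auto simp: Li_def\<close>)
qed


lemma sq_inv_right:
  fixes L :: "nat \<Rightarrow> nat \<Rightarrow> real"
  assumes inj: "\<And>c. (\<forall>i<k. (\<Sum>j<k. L i j * c j) = 0) \<Longrightarrow> (\<forall>j<k. c j = 0)"
  shows "\<forall>i<k. \<forall>j<k. (\<Sum>l<k. L i l * sq_inv k L l j) = (if i = j then 1 else 0)"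
proof -
  define P where "P = (\<lambda>Li. (\<forall>i<k. \<forall>j<k. (\<Sum>l<k. L i l * Li l j) = (if i = j then 1 else 0)) \<and>
      (\<forall>i<k. \<forall>j<k. (\<Sum>l<k. Li i l * L l j) = (if i = j then 1 else 0)) \<and>
      (\<forall>i j. k \<le> i \<or> k \<le> j \<longrightarrow> (Li i j :: real) = 0))"
  have ex: "\<exists>Li. P Li" unfolding P_def by (rule sq_inv_exists[OF inj])
  have uniq: "X = Y" if X: "P X" and Y: "P Y" for X Y
  proof (rule ext, rule ext)
    fix i j
    show "X i j = Y i j"
    proof (cases "i < k \<and> j < k")
      case True
      have "Y i j = (\<Sum>l<k. (if i = l then 1 else 0) * Y l j)"
        using True by (simp add: delta_sum_l)
      also have "\<dots> = (\<Sum>l<k. (\<Sum>m<k. X i m * L m l) * Y l j)"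
        using X True unfolding P_def by (intro sum.cong) auto
      also have "\<dots> = (\<Sum>m<k. X i m * (\<Sum>l<k. L m l * Y l j))"
        unfolding sum_distrib_right sum_distrib_left mult.assoc by (rule sum.swap)
      also have "\<dots> = (\<Sum>m<k. X i m * (if m = j then 1 else 0))"
        using Y True unfolding P_def by (intro sum.cong) auto
      also have "\<dots> = X i j" using True by (simp add: delta_sum_r)
      finally show ?thesis by simp
    next
      case False
      then show ?thesis using X Y unfolding P_def by auto
    qed
  qed
  have "\<exists>!Li. P Li" using ex uniq by blast
  then have "P (THE Li. P Li)" by (rule theI')
  moreover have "sq_inv k L = (THE Li. P Li)" unfolding sq_inv_def P_def by simp
  ultimately have "P (sq_inv k L)" by simp
  then show ?thesis unfolding P_def by blast
qed

definition posdef :: "real^'d^'d \<Rightarrow> bool" where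
  "posdef B \<longleftrightarrow> (\<forall>v. v \<noteq> 0 \<longrightarrow> v \<bullet> (B *v v) > 0)"

definition gcoef :: "real^'d^'d \<Rightarrow> real^'d \<Rightarrow> (real^'d) list \<Rightarrow> nat \<Rightarrow> real" where
  "gcoef B r0 S = (\<lambda>i. \<Sum>j<length S. sq_inv (length S) (\<lambda>i j. (S ! i) \<bullet> (B *v (S ! j))) i j * ((S ! j) \<bullet> r0))"

definition gw :: "real^'d^'d \<Rightarrow> real^'d \<Rightarrow> (real^'d) list \<Rightarrow> real^'d" where
  "gw B r0 S = (\<Sum>i<length S. gcoef B r0 S i *\<^sub>R (S ! i))"

lemma bcg_x_gw: "bcg_x A Sig b x0 S = x0 + (Sig ** transpose A) *v gw (A ** Sig ** transpose A) (b - A *v x0) S"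
  unfolding bcg_x_def gw_def gcoef_def Let_def by simp

lemma gw_span: "gw B r0 S \<in> span (set S)"
  unfolding gw_def by (intro span_sum span_scale span_base) auto

lemma indep_coef:
  fixes S :: "(real^'d) list"
  assumes "distinct S" "independent (set S)" "(\<Sum>i<length S. c i *\<^sub>R S ! i) = 0"
  shows "\<forall>i<length S. c i = 0"
proof -
  let ?k = "length S"
  define u where "u = (\<lambda>v. c (THE i. i < ?k \<and> S ! i = v))"
  have u: "u (S ! i) = c i" if "i < ?k" for i
  proof -
    have "(THE j. j < ?k \<and> S ! j = S ! i) = i"
      using that assms(1) by (auto simp: nth_eq_iff_index_eq)
    then show ?thesis unfolding u_def by simp
  qed
  have inj: "inj_on (nth S) {..<?k}" using assms(1) by (intro inj_on_nth) auto
  have img: "nth S ` {..<?k} = set S" by (auto simp: in_set_conv_nth)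
  have "(\<Sum>v\<in>set S. u v *\<^sub>R v) = (\<Sum>i<?k. u (S ! i) *\<^sub>R S ! i)"
    unfolding img[symmetric] by (rule sum.reindex[OF inj, unfolded comp_def])
  also have "\<dots> = 0" using assms(3) u by simp
  finally have "(\<Sum>v\<in>set S. u v *\<^sub>R v) = 0" .
  then have "\<forall>v\<in>set S. u v = 0"
    using assms(2) real_vector.dependent_finite[of "set S"] by auto
  then show ?thesis using u by auto
qed

lemma Lam_inj:
  fixes S :: "(real^'d) list"
  assumes pd: "posdef B" and d: "distinct S" and ind: "independent (set S)"
    and h: "\<forall>i<length S. (\<Sum>j<length S. ((S ! i) \<bullet> (B *v (S ! j))) * c j) = 0"
  shows "\<forall>j<length S. c j = 0"
proof -
  let ?k = "length S"
  define w where "w = (\<Sum>j<?k. c j *\<^sub>R S ! j)"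
  have Bw: "B *v w = (\<Sum>j<?k. c j *\<^sub>R (B *v S ! j))"
    unfolding w_def by (simp add: mv_sum matrix_vector_mult_scaleR)
  have "S ! i \<bullet> (B *v w) = 0" if "i < ?k" for i
    using h that unfolding Bw by (simp add: inner_sum_right mult.commute)
  then have "w \<bullet> (B *v w) = 0"
    unfolding w_def[of] by (simp add: inner_sum_left)
  then have "w = 0" using pd unfolding posdef_def by force
  then show ?thesis using indep_coef[OF d ind] unfolding w_def by blast
qed

lemma normal_eq:
  fixes S :: "(real^'d) list"
  assumes pd: "posdef B" and d: "distinct S" and ind: "independent (set S)"
  shows "\<forall>u\<in>span (set S). u \<bullet> (r0 - B *v gw B r0 S) = 0"
proof -
  let ?k = "length S"
  let ?L = "\<lambda>i j. (S ! i) \<bullet> (B *v (S ! j))"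
  have inv: "\<forall>i<?k. \<forall>j<?k. (\<Sum>l<?k. ?L i l * sq_inv ?k ?L l j) = (if i = j then 1 else 0)"
    by (rule sq_inv_right) (use Lam_inj[OF pd d ind] in blast)
  have Bw: "B *v gw B r0 S = (\<Sum>i<?k. gcoef B r0 S i *\<^sub>R (B *v S ! i))"
    unfolding gw_def by (simp add: mv_sum matrix_vector_mult_scaleR)
  have each: "S ! j \<bullet> (r0 - B *v gw B r0 S) = 0" if j: "j < ?k" for j
  proof -
    have "S ! j \<bullet> (B *v gw B r0 S) = (\<Sum>i<?k. ?L j i * gcoef B r0 S i)"
      unfolding Bw by (simp add: inner_sum_right mult.commute)
    also have "\<dots> = (\<Sum>i<?k. \<Sum>l<?k. ?L j i * sq_inv ?k ?L i l * (S ! l \<bullet> r0))"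
      unfolding gcoef_def by (simp add: sum_distrib_left mult.assoc)
    also have "\<dots> = (\<Sum>l<?k. (\<Sum>i<?k. ?L j i * sq_inv ?k ?L i l) * (S ! l \<bullet> r0))"
      unfolding sum_distrib_right mult.assoc by (rule sum.swap)
    also have "\<dots> = (\<Sum>l<?k. (if j = l then 1 else 0) * (S ! l \<bullet> r0))"
      using inv j by (intro sum.cong) auto
    also have "\<dots> = S ! j \<bullet> r0" using j by (simp add: delta_sum_l)
    finally show ?thesis by (simp add: inner_diff_right)
  qed
  show ?thesis
  proof
    fix u assume "u \<in> span (set S)"
    then show "u \<bullet> (r0 - B *v gw B r0 S) = 0"
    proof (rule span_induct[where P="\<lambda>u. u \<bullet> (r0 - B *v gw B r0 S) = 0"])
      show "subspace {u. u \<bullet> (r0 - B *v gw B r0 S) = 0}"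
        by (auto simp: subspace_def inner_add_left)
    qed (use each in \<open>auto simp: in_set_conv_nth\<close>)
  qed
qed

lemma length_dirs: "length (bcg_dirs A Sig b x0 k) = k"
  by (induction k) (simp_all add: Let_def)

lemma B_posdef:
  fixes A Sig :: "real^'d^'d"
  assumes inv: "invertible A" and spd: "sym_pos_def Sig"
  shows "posdef (A ** Sig ** transpose A)"
  unfolding posdef_def
proof (intro allI impI)
  fix v :: "real^'d" assume v: "v \<noteq> 0"
  let ?y = "transpose A *v v"
  have "inj ((*v) (transpose A))"
    by (rule inj_matrix_vector_mult[OF transpose_invertible[OF inv]])
  then have y: "?y \<noteq> 0" using v by (metis injD matrix_vector_mult_0_right)
  have "v \<bullet> ((A ** Sig ** transpose A) *v v) = v \<bullet> (A *v (Sig *v ?y))"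
    by (simp del: transpose_matrix_vector add: matrix_vector_mul_assoc matrix_mul_assoc)
  also have "\<dots> = ?y \<bullet> (Sig *v ?y)"
    by (simp add: dot_lmul_matrix[symmetric])
  finally show "v \<bullet> ((A ** Sig ** transpose A) *v v) > 0"
    using spd y unfolding sym_pos_def_def by simp
qed

lemma resid:
  "b - A *v bcg_x A Sig b x0 S =
   (b - A *v x0) - (A ** Sig ** transpose A) *v gw (A ** Sig ** transpose A) (b - A *v x0) S"
  unfolding bcg_x_gw by (simp add: matrix_vector_right_distrib matrix_vector_mul_assoc matrix_mul_assoc)

definition Gset :: "real^'d^'d \<Rightarrow> real^'d \<Rightarrow> nat \<Rightarrow> (real^'d) set" where
  "Gset B r0 k = {(((*v) B) ^^ i) r0 | i. i < k}"

lemma Gset_mono: "k \<le> l \<Longrightarrow> Gset B r0 k \<subseteq> Gset B r0 l"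
  unfolding Gset_def by auto

lemma Gset_mult: "(*v) B ` span (Gset B r0 k) \<subseteq> span (Gset B r0 (Suc k))"
proof -
  have "(*v) B ` span (Gset B r0 k) = span ((*v) B ` Gset B r0 k)"
    by (rule span_linear_image[symmetric]) simp
  also have "\<dots> \<subseteq> span (Gset B r0 (Suc k))"
  proof (rule span_mono)
    show "(*v) B ` Gset B r0 k \<subseteq> Gset B r0 (Suc k)"
    proof
      fix x assume "x \<in> (*v) B ` Gset B r0 k"
      then obtain i where "i < k" "x = B *v (((*v) B) ^^ i) r0" unfolding Gset_def by auto
      then have "x = (((*v) B) ^^ Suc i) r0" "Suc i < Suc k" by auto
      then show "x \<in> Gset B r0 (Suc k)" unfolding Gset_def by blast
    qed
  qed
  finally show ?thesis .
qed

lemma dirs_inv: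
  fixes A Sig :: "real^'d^'d" and b x0 :: "real^'d"
  assumes inv: "invertible A" and spd: "sym_pos_def Sig"
    and nz: "\<forall>k\<in>{1..m}. bcg_stilde A Sig b x0 k \<noteq> 0"
  shows "k \<le> m \<Longrightarrow> distinct (bcg_dirs A Sig b x0 k) \<and> independent (set (bcg_dirs A Sig b x0 k)) \<and>
     set (bcg_dirs A Sig b x0 k) \<subseteq> span (Gset (A ** Sig ** transpose A) (b - A *v x0) k)"
proof (induction k)
  case 0
  then show ?case by (simp add: independent_empty)
next
  case (Suc k)
  define B where "B = A ** Sig ** transpose A"
  define r0 where "r0 = b - A *v x0"
  define S where "S = bcg_dirs A Sig b x0 k"
  define t where "t = bcg_st A Sig b x0 S"
  have pd: "posdef B" unfolding B_def by (rule B_posdef[OF inv spd])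
  from Suc have IH: "distinct S" "independent (set S)" "set S \<subseteq> span (Gset B r0 k)"
    unfolding S_def B_def r0_def by auto
  have tnz: "t \<noteq> 0"
  proof -
    have "bcg_stilde A Sig b x0 (Suc k) \<noteq> 0" using nz Suc.prems by auto
    then show ?thesis unfolding t_def S_def bcg_stilde_def by simp
  qed
  have wpos: "wnorm B t > 0" unfolding wnorm_def using pd tnz unfolding posdef_def by simp
  define c where "c = 1 / wnorm B t"
  have c: "c \<noteq> 0" unfolding c_def using wpos by simp
  have dirs: "bcg_dirs A Sig b x0 (Suc k) = S @ [c *\<^sub>R t]"
    unfolding S_def t_def c_def B_def by (simp add: Let_def)
  have key: "t \<in> span (Gset B r0 (Suc k)) \<and> t \<notin> span (set S)"
  proof (cases "S = []")
    case True
    then have "t = r0" unfolding t_def r0_def bcg_st_def by simp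
    moreover have "r0 \<in> Gset B r0 (Suc k)" unfolding Gset_def by force
    ultimately show ?thesis using True tnz by (auto intro: span_base)
  next
    case False
    define w where "w = gw B r0 S"
    define r where "r = r0 - B *v w"
    have tr: "t = r - winner B (last S) r *\<^sub>R last S"
      unfolding t_def bcg_st_def using False
      by (simp add: Let_def resid r_def w_def B_def r0_def)
    have lastS: "last S \<in> set S" using False by simp
    have wS: "w \<in> span (set S)" unfolding w_def by (rule gw_span)
    have spanS: "span (set S) \<subseteq> span (Gset B r0 k)"
      using IH(3) by (metis span_mono span_span)
    have Gk: "span (Gset B r0 k) \<subseteq> span (Gset B r0 (Suc k))"
      by (intro span_mono Gset_mono) simp
    have "B *v w \<in> span (Gset B r0 (Suc k))" using Gset_mult[of B r0 k] wS spanS by blast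
    moreover have "r0 \<in> span (Gset B r0 (Suc k))"
      by (rule span_base) (unfold Gset_def, force)
    moreover have "last S \<in> span (Gset B r0 (Suc k))"
      using lastS IH(3) Gk by blast
    ultimately have t1: "t \<in> span (Gset B r0 (Suc k))"
      unfolding tr r_def by (intro span_diff span_scale) auto
    have t2: "t \<notin> span (set S)"
    proof
      assume "t \<in> span (set S)"
      then have "r \<in> span (set S)"
        using tr lastS by (metis add_diff_cancel diff_add_cancel span_add span_base span_scale)
      moreover have "\<forall>u\<in>span (set S). u \<bullet> r = 0"
        using normal_eq[OF pd IH(1) IH(2), of r0] unfolding r_def w_def by blast
      ultimately have "r = 0" by auto
      then have "t = 0" unfolding tr winner_def by simp
      with tnz show False by simp
    qed
    show ?thesis using t1 t2 by simp
  qed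
  have s1: "c *\<^sub>R t \<in> span (Gset B r0 (Suc k))" using key by (intro span_scale) simp
  have s2: "c *\<^sub>R t \<notin> span (set S)"
  proof
    assume "c *\<^sub>R t \<in> span (set S)"
    then have "(1/c) *\<^sub>R (c *\<^sub>R t) \<in> span (set S)" by (rule span_scale)
    with c key show False by simp
  qed
  have "set S \<subseteq> span (Gset B r0 (Suc k))"
    using IH(3) span_mono[OF Gset_mono[of k "Suc k" B r0]] by auto
  moreover have "independent (insert (c *\<^sub>R t) (set S))"
    using IH(2) s2 by (simp add: independent_insert)
  moreover have "c *\<^sub>R t \<notin> set S" using s2 span_base by blast
  ultimately show ?case
    unfolding dirs B_def[symmetric] r0_def[symmetric]
    using IH s1 by auto
qed

lemma matrix_inv_both:
  fixes X :: "real^'d^'d"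
  assumes "invertible X"
  shows "X ** matrix_inv X = Finite_Cartesian_Product.mat 1 \<and> matrix_inv X ** X = Finite_Cartesian_Product.mat 1"
  using assms unfolding invertible_def matrix_inv_def by (rule someI_ex)

theorem proposition8:
  fixes A Sig :: "real^'d^'d" and b x0 :: "real^'d" and m :: nat
  assumes "invertible A"
    and "sym_pos_def Sig"
    and "m \<ge> 1"
    and "\<forall>k\<in>{1..m}. bcg_stilde A Sig b x0 k \<noteq> 0"
  shows "let xstar = matrix_inv A *v b;
             K = {x0 + v | v. v \<in> krylov (m - 1) (Sig ** transpose A ** A) (Sig *v (transpose A *v (b - A *v x0)))};
             xm = bcg_mean A Sig b x0 m
         in xm \<in> K \<and>
            (\<forall>x\<in>K. x \<noteq> xm \<longrightarrow> wnorm (matrix_inv Sig) (xm - xstar) < wnorm (matrix_inv Sig) (x - xstar))"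
proof -
  note inv = assms(1) and spd = assms(2) and m1 = assms(3) and nz = assms(4)
  define B where "B = A ** Sig ** transpose A"
  define r0 where "r0 = b - A *v x0"
  define P where "P = Sig ** transpose A"
  define M where "M = Sig ** transpose A ** A"
  define v0 where "v0 = Sig *v (transpose A *v (b - A *v x0))"
  define S where "S = bcg_dirs A Sig b x0 m"
  define w where "w = gw B r0 S"
  define xm where "xm = bcg_mean A Sig b x0 m"
  define xs where "xs = matrix_inv A *v b"
  define Q where "Q = matrix_inv Sig"
  define K where "K = {x0 + v | v. v \<in> krylov (m - 1) M v0}"
  have pd: "posdef B" unfolding B_def by (rule B_posdef[OF inv spd])
  have SI: "distinct S" "independent (set S)" "set S \<subseteq> span (Gset B r0 m)"
    using dirs_inv[OF inv spd nz, of m] unfolding S_def B_def r0_def by auto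
  have lenS: "length S = m" unfolding S_def by (rule length_dirs)
  have Gimg: "Gset B r0 m = (\<lambda>i. (((*v) B) ^^ i) r0) ` {..<m}" unfolding Gset_def by auto
  have spaneq: "span (set S) = span (Gset B r0 m)"
  proof (rule subspace_dim_equal)
    show "subspace (span (set S))" "subspace (span (Gset B r0 m))" by (rule subspace_span)+
    show "span (set S) \<subseteq> span (Gset B r0 m)" using SI(3) by (metis span_mono span_span)
    have "dim (span (Gset B r0 m)) \<le> card (Gset B r0 m)"
      by (rule dim_le_card) (auto simp: Gimg span_superset)
    also have "\<dots> \<le> m" unfolding Gimg using card_image_le[of "{..<m}"] by simp
    also have "m = dim (span (set S))"
      using SI lenS by (simp add: dim_eq_card_independent distinct_card)
    finally show "dim (span (Gset B r0 m)) \<le> dim (span (set S))" .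
  qed
  have pow: "(((*v) M) ^^ i) v0 = P *v ((((*v) B) ^^ i) r0)" for i
  proof (induction i)
    case 0
    then show ?case unfolding v0_def P_def r0_def
      by (simp del: transpose_matrix_vector add: matrix_vector_mul_assoc)
  next
    case (Suc i)
    then show ?case unfolding M_def P_def B_def
      by (simp del: transpose_matrix_vector add: matrix_vector_mul_assoc matrix_mul_assoc)
  qed
  have e1: "{..<m} = {i. i \<le> m - 1}" using m1 by auto
  have "{(((*v) M) ^^ i) v0 | i. i \<le> m - 1} = (\<lambda>i. (((*v) M) ^^ i) v0) ` {..<m}"
    unfolding e1 by blast
  also have "\<dots> = (*v) P ` Gset B r0 m" unfolding Gimg by (simp add: pow image_image)
  finally have "{(((*v) M) ^^ i) v0 | i. i \<le> m - 1} = (*v) P ` Gset B r0 m" .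
  then have kry: "krylov (m - 1) M v0 = (*v) P ` span (set S)"
    unfolding krylov_def spaneq by (simp add: span_linear_image)
  have Kchar: "K = {x0 + P *v u | u. u \<in> span (set S)}"
    unfolding K_def kry by auto
  have xm_eq: "xm = x0 + P *v w"
    unfolding xm_def bcg_mean_def bcg_x_gw w_def P_def B_def r0_def S_def ..
  have wS: "w \<in> span (set S)" unfolding w_def by (rule gw_span)
  define rm where "rm = r0 - B *v w"
  have orth: "\<forall>u\<in>span (set S). u \<bullet> rm = 0"
    using normal_eq[OF pd SI(1) SI(2), of r0] unfolding rm_def w_def by blast
  have xmK: "xm \<in> K" unfolding Kchar xm_eq using wS by blast
  have "Sig *v x = 0 \<Longrightarrow> x = 0" for x
    using spd unfolding sym_pos_def_def by (metis inner_zero_right less_irrefl)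
  then have invS: "invertible Sig"
    using matrix_left_invertible_ker invertible_left_inverse by blast
  have QS: "Q ** Sig = Finite_Cartesian_Product.mat 1" "Sig ** Q = Finite_Cartesian_Product.mat 1"
    using matrix_inv_both[OF invS] unfolding Q_def by auto
  have Axs: "A *v xs = b"
    using matrix_inv_both[OF inv] unfolding xs_def
    by (simp add: matrix_vector_mul_assoc)
  have symS: "transpose Sig = Sig" using spd unfolding sym_pos_def_def by simp
  define e where "e = xm - xs"
  have Ae: "A *v e = - rm"
  proof -
    have "A *v (P *v w) = B *v w" unfolding P_def B_def
      by (simp del: transpose_matrix_vector add: matrix_vector_mul_assoc matrix_mul_assoc)
    then show ?thesis unfolding e_def rm_def r0_def xm_eq
      by (simp add: matrix_vector_right_distrib matrix_vector_mult_diff_distrib Axs)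
  qed
  have main: "wnorm Q (xm - xs) < wnorm Q (x - xs)" if xK: "x \<in> K" and xne: "x \<noteq> xm" for x
  proof -
    obtain u where u: "u \<in> span (set S)" "x = x0 + P *v u" using xK unfolding Kchar by blast
    define z where "z = u - w"
    have zS: "z \<in> span (set S)" unfolding z_def using u(1) wS by (rule span_diff)
    define y where "y = transpose A *v z"
    define d where "d = P *v z"
    have dy: "d = Sig *v y" unfolding d_def y_def P_def
      by (simp del: transpose_matrix_vector add: matrix_vector_mul_assoc)
    have xd: "x - xs = e + d" unfolding e_def d_def z_def u(2) xm_eq
      by (simp add: matrix_vector_mult_diff_distrib algebra_simps)
    have dnz: "d \<noteq> 0" using xne unfolding d_def z_def u(2) xm_eq
      by (simp add: matrix_vector_mult_diff_distrib)
    then have ynz: "y \<noteq> 0" unfolding dy by auto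
    have Qd: "Q *v d = y" unfolding dy by (simp add: matrix_vector_mul_assoc QS)
    have ey: "e \<bullet> y = 0"
    proof -
      have "e \<bullet> y = z \<bullet> (A *v e)" unfolding y_def
        by (simp add: dot_lmul_matrix[symmetric] inner_commute)
      then show ?thesis using Ae orth zS by simp
    qed
    have dQe: "d \<bullet> (Q *v e) = 0"
    proof -
      have "d \<bullet> (Q *v e) = (y v* Sig) \<bullet> (Q *v e)"
        unfolding dy by (metis symS transpose_matrix_vector)
      also have "\<dots> = y \<bullet> e"
        by (simp add: dot_lmul_matrix matrix_vector_mul_assoc QS)
      finally show ?thesis using ey by (simp add: inner_commute)
    qed
    have "d \<bullet> (Q *v d) = y \<bullet> (Sig *v y)" unfolding Qd by (simp add: dy inner_commute)
    then have dQd: "d \<bullet> (Q *v d) > 0"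
      using spd ynz unfolding sym_pos_def_def by simp
    have "(x - xs) \<bullet> (Q *v (x - xs)) = e \<bullet> (Q *v e) + e \<bullet> (Q *v d) + d \<bullet> (Q *v e) + d \<bullet> (Q *v d)"
      unfolding xd by (simp add: matrix_vector_right_distrib inner_add_left inner_add_right)
    then have "(x - xs) \<bullet> (Q *v (x - xs)) > e \<bullet> (Q *v e)"
      using ey dQe dQd Qd by simp
    then show ?thesis unfolding wnorm_def e_def by simp
  qed
  show ?thesis
    unfolding Let_def
    using xmK main
    unfolding K_def M_def v0_def xm_def xs_def Q_def by blast
qed

end
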